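(* Let $(\Omega,\mathcal F,\mathbf P)$ be a probability space, $L^\infty=L^\infty(\Omega,\mathcal F,\mathbf P)$ with its norm dual $(L^\infty)^*$, and let $C\subset L^\infty$ be a convex cone such that $C\cap L^\infty_+=\{0\}$, where $L^\infty_+$ is the set of a.s. non-negative elements. Let $C^\circ=\{\xi\in (L^\infty)^*:\langle x,\xi\rangle\le 0 \text{ for all } x\in C\}$. Then for any $f\in (L^\infty)^*$ the following conditions are equivalent: (i) $\sup_{x\in C_1}\langle x,f\rangle<+\infty$, where $C_1=\{x\in C: x^-\le 1 \text{ a.s.}\}$; (ii) there exists $g\in (L^\infty)^*$ such that $g\ge f$ and $g\in C^\circ$.
   Context: $x^-=\max\{-x,0\}$. For $f,g\in (L^\infty)^*$, $g\ge f$ means $\langle x,g-f\rangle\ge 0$ for all $x\in L^\infty_+$. *)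

theory Defs
  imports "HOL-Probability.Probability"
begin

text \<open>Elements of L-infinity are represented by measurable, essentially bounded
  real functions (equivalence classes are handled by letting all notions respect
  a.e. equality).\<close>
definition Linf :: "'a measure \<Rightarrow> ('a \<Rightarrow> real) set" where
  "Linf M = {x. x \<in> borel_measurable M \<and> (\<exists>B. AE \<omega> in M. \<bar>x \<omega>\<bar> \<le> B)}"

definition linf_norm :: "'a measure \<Rightarrow> ('a \<Rightarrow> real) \<Rightarrow> real" where
  "linf_norm M x = real_of_ereal (esssup M (\<lambda>\<omega>. ereal \<bar>x \<omega>\<bar>))"

definition Linf_dual :: "'a measure \<Rightarrow> (('a \<Rightarrow> real) \<Rightarrow> real) set" where
  "Linf_dual M = {\<phi>.
     (\<forall>x\<in>Linf M. \<forall>y\<in>Linf M. \<phi> (\<lambda>\<omega>. x \<omega> + y \<omega>) = \<phi> x + \<phi> y) \<and>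
     (\<forall>x\<in>Linf M. \<forall>a::real. \<phi> (\<lambda>\<omega>. a * x \<omega>) = a * \<phi> x) \<and>
     (\<exists>K. \<forall>x\<in>Linf M. \<bar>\<phi> x\<bar> \<le> K * linf_norm M x)}"

definition Linf_pos :: "'a measure \<Rightarrow> ('a \<Rightarrow> real) set" where
  "Linf_pos M = {x \<in> Linf M. AE \<omega> in M. 0 \<le> x \<omega>}"

definition dual_ge :: "'a measure \<Rightarrow> (('a \<Rightarrow> real) \<Rightarrow> real) \<Rightarrow> (('a \<Rightarrow> real) \<Rightarrow> real) \<Rightarrow> bool" where
  "dual_ge M g f \<longleftrightarrow> (\<forall>x\<in>Linf_pos M. 0 \<le> g x - f x)"

definition convex_cone_fun :: "('a \<Rightarrow> real) set \<Rightarrow> bool" where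
  "convex_cone_fun C \<longleftrightarrow> C \<noteq> {} \<and>
     (\<forall>x\<in>C. \<forall>y\<in>C. (\<lambda>\<omega>. x \<omega> + y \<omega>) \<in> C) \<and>
     (\<forall>x\<in>C. \<forall>a::real. 0 \<le> a \<longrightarrow> (\<lambda>\<omega>. a * x \<omega>) \<in> C)"

definition polar :: "'a measure \<Rightarrow> ('a \<Rightarrow> real) set \<Rightarrow> (('a \<Rightarrow> real) \<Rightarrow> real) set" where
  "polar M C = {\<xi> \<in> Linf_dual M. \<forall>x\<in>C. \<xi> x \<le> 0}"

definition C_one :: "'a measure \<Rightarrow> ('a \<Rightarrow> real) set \<Rightarrow> ('a \<Rightarrow> real) set" where
  "C_one M C = {x \<in> C. AE \<omega> in M. max (- x \<omega>) 0 \<le> 1}"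

end

theory Submission
  imports Defs
begin

definition lgraph :: "('a\<Rightarrow>real) set \<Rightarrow> (('a\<Rightarrow>real)\<Rightarrow>real) \<Rightarrow> (('a\<Rightarrow>real)\<times>real) set \<Rightarrow> bool" where
 "lgraph V q G \<longleftrightarrow> G \<subseteq> V \<times> UNIV \<and> (\<forall>x a b. (x,a)\<in>G \<longrightarrow> (x,b)\<in>G \<longrightarrow> a=b)
   \<and> ((\<lambda>\<omega>. 0),0)\<in>G \<and> (\<forall>x a y b. (x,a)\<in>G \<longrightarrow> (y,b)\<in>G \<longrightarrow> ((\<lambda>\<omega>. x \<omega> + y \<omega>), a+b)\<in>G)
   \<and> (\<forall>x a c. (x,a)\<in>G \<longrightarrow> ((\<lambda>\<omega>. c * x \<omega>), c*a)\<in>G) \<and> (\<forall>x a. (x,a)\<in>G \<longrightarrow> a \<le> q x)"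

lemma hahn_banach_fun:
  fixes V :: "('a \<Rightarrow> real) set" and q :: "('a\<Rightarrow>real) \<Rightarrow> real"
  assumes V0: "(\<lambda>\<omega>. 0) \<in> V"
    and Vadd: "\<And>x y. x\<in>V \<Longrightarrow> y\<in>V \<Longrightarrow> (\<lambda>\<omega>. x \<omega> + y \<omega>) \<in> V"
    and Vsmul: "\<And>x a. x\<in>V \<Longrightarrow> (\<lambda>\<omega>. a * x \<omega>) \<in> V"
    and qadd: "\<And>x y. x\<in>V \<Longrightarrow> y\<in>V \<Longrightarrow> q (\<lambda>\<omega>. x \<omega> + y \<omega>) \<le> q x + q y"
    and qsmul: "\<And>x a. x\<in>V \<Longrightarrow> a > 0 \<Longrightarrow> q (\<lambda>\<omega>. a * x \<omega>) = a * q x"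
  shows "\<exists>h. (\<forall>x\<in>V. \<forall>y\<in>V. h (\<lambda>\<omega>. x \<omega> + y \<omega>) = h x + h y) \<and>
             (\<forall>x\<in>V. \<forall>a. h (\<lambda>\<omega>. a * x \<omega>) = a * h x) \<and> (\<forall>x\<in>V. h x \<le> q x)"
proof -
  have Vsub: "(\<lambda>\<omega>. x \<omega> - y \<omega>) \<in> V" if "x\<in>V" "y\<in>V" for x y
    using Vadd[OF that(1) Vsmul[OF that(2), of "-1"]] by simp
  have q0: "q (\<lambda>\<omega>. 0) = 0"
    using qsmul[OF V0, of 2] by simp
  define A where "A = {G. lgraph V q G}"
  have "\<exists>M\<in>A. \<forall>X\<in>A. M \<subseteq> X \<longrightarrow> X = M"
  proof (rule Zorn_Lemma2, intro ballI)
    fix C assume C: "C \<in> chains A"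
    show "\<exists>U\<in>A. \<forall>X\<in>C. X \<subseteq> U"
    proof (cases "C = {}")
      case True
      have "{((\<lambda>\<omega>. 0::real),0::real)} \<in> A"
        unfolding A_def lgraph_def using V0 q0 by auto
      then show ?thesis using True by blast
    next
      case False
      have CA: "C \<subseteq> A" and ch: "\<And>X Y. X\<in>C \<Longrightarrow> Y\<in>C \<Longrightarrow> X \<subseteq> Y \<or> Y \<subseteq> X"
        using C unfolding chains_def chain_subset_def by auto
      have lg: "lgraph V q X" if "X\<in>C" for X using CA that A_def by auto
      have two: "\<exists>X\<in>C. p1 \<in> X \<and> p2 \<in> X" if pp: "p1 \<in> \<Union>C" "p2 \<in> \<Union>C" for p1 p2
      proof -
        obtain X1 X2 where "X1\<in>C" "X2\<in>C" "p1\<in>X1" "p2\<in>X2" using pp by auto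
        then show ?thesis using ch[of X1 X2] by blast
      qed
      have "lgraph V q (\<Union>C)"
        unfolding lgraph_def
      proof (intro conjI allI impI)
        show "\<Union>C \<subseteq> V \<times> UNIV" using lg unfolding lgraph_def by blast
        show "((\<lambda>\<omega>. 0), 0) \<in> \<Union>C" using lg False unfolding lgraph_def by blast
      next
        fix x a b assume "(x,a) \<in> \<Union>C" "(x,b) \<in> \<Union>C"
        then obtain X where "X\<in>C" "(x,a)\<in>X" "(x,b)\<in>X" using two by blast
        then show "a = b" using lg unfolding lgraph_def by blast
      next
        fix x a y b assume "(x,a) \<in> \<Union>C" "(y,b) \<in> \<Union>C"
        then obtain X where "X\<in>C" "(x,a)\<in>X" "(y,b)\<in>X" using two by blast
        then show "((\<lambda>\<omega>. x \<omega> + y \<omega>), a+b) \<in> \<Union>C" using lg unfolding lgraph_def by blast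
      next
        fix x a c assume "(x,a) \<in> \<Union>C"
        then show "((\<lambda>\<omega>. c * x \<omega>), c*a) \<in> \<Union>C" using lg unfolding lgraph_def by blast
      next
        fix x a assume "(x,a) \<in> \<Union>C"
        then show "a \<le> q x" using lg unfolding lgraph_def by blast
      qed
      then show ?thesis unfolding A_def by blast
    qed
  qed
  then obtain G where GA: "lgraph V q G" and Gmax: "\<And>X. lgraph V q X \<Longrightarrow> G \<subseteq> X \<Longrightarrow> X = G"
    unfolding A_def by blast
  have GV: "\<And>x a. (x,a)\<in>G \<Longrightarrow> x \<in> V"
   and Gfun: "\<And>x a b. (x,a)\<in>G \<Longrightarrow> (x,b)\<in>G \<Longrightarrow> a = b"
   and G0: "((\<lambda>\<omega>. 0),0)\<in>G"
   and Gadd: "\<And>x a y b. (x,a)\<in>G \<Longrightarrow> (y,b)\<in>G \<Longrightarrow> ((\<lambda>\<omega>. x \<omega> + y \<omega>), a+b)\<in>G"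
   and Gsmul: "\<And>x a c. (x,a)\<in>G \<Longrightarrow> ((\<lambda>\<omega>. c * x \<omega>), c*a)\<in>G"
   and Gq: "\<And>x a. (x,a)\<in>G \<Longrightarrow> a \<le> q x"
    using GA unfolding lgraph_def by blast+
  have dom: "\<exists>a. (y,a)\<in>G" if yV: "y \<in> V" for y
  proof (rule ccontr)
    assume ny: "\<not> (\<exists>a. (y,a)\<in>G)"
    define L where "L = {a - q (\<lambda>\<omega>. x \<omega> - y \<omega>) | x a. (x,a) \<in> G}"
    define R where "R = {q (\<lambda>\<omega>. x \<omega> + y \<omega>) - a | x a. (x,a) \<in> G}"
    have LR: "l \<le> r" if lr: "l \<in> L" "r \<in> R" for l r
    proof -
      obtain x a where xa: "(x,a)\<in>G" "l = a - q (\<lambda>\<omega>. x \<omega> - y \<omega>)" using lr L_def by auto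
      obtain x' a' where xa': "(x',a')\<in>G" "r = q (\<lambda>\<omega>. x' \<omega> + y \<omega>) - a'" using lr R_def by auto
      have "a + a' \<le> q (\<lambda>\<omega>. x \<omega> + x' \<omega>)" using Gq[OF Gadd[OF xa(1) xa'(1)]] .
      also have "(\<lambda>\<omega>. x \<omega> + x' \<omega>) = (\<lambda>\<omega>. (\<lambda>\<omega>. x \<omega> - y \<omega>) \<omega> + (\<lambda>\<omega>. x' \<omega> + y \<omega>) \<omega>)" by simp
      also have "q \<dots> \<le> q (\<lambda>\<omega>. x \<omega> - y \<omega>) + q (\<lambda>\<omega>. x' \<omega> + y \<omega>)"
        by (rule qadd) (use Vsub Vadd GV xa xa' yV in auto)
      finally show ?thesis using xa xa' by simp
    qed
    define c where "c = Sup L"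
    have RI: "v \<in> R" if "(x,a)\<in>G" "v = q (\<lambda>\<omega>. x \<omega> + y \<omega>) - a" for x a v
      unfolding R_def using that by blast
    have LI: "v \<in> L" if "(x,a)\<in>G" "v = a - q (\<lambda>\<omega>. x \<omega> - y \<omega>)" for x a v
      unfolding L_def using that by blast
    have Lne: "L \<noteq> {}" and Rne: "R \<noteq> {}" using G0 L_def R_def by auto
    have Lc: "l \<le> c" if "l \<in> L" for l
      unfolding c_def using that Rne LR by (meson all_not_in_conv bdd_aboveI cSup_upper)
    have cR: "c \<le> r" if "r \<in> R" for r
      unfolding c_def using that Lne LR by (meson cSup_least)
    define G' where "G' = {((\<lambda>\<omega>. x \<omega> + t * y \<omega>), a + t * c) | x a t. (x,a) \<in> G}"
    have G'I: "(z,b) \<in> G'" if "(x,a)\<in>G" "z = (\<lambda>\<omega>. x \<omega> + t * y \<omega>)" "b = a + t*c" for x a t z b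
      unfolding G'_def using that by blast
    have "lgraph V q G'"
      unfolding lgraph_def
    proof (intro conjI allI impI)
      show "G' \<subseteq> V \<times> UNIV" unfolding G'_def using GV Vadd Vsmul yV by blast
      show "((\<lambda>\<omega>. 0), 0) \<in> G'" unfolding G'_def using G0 by force
    next
      fix x a b assume h1: "(x,a) \<in> G'" and h2: "(x,b) \<in> G'"
      obtain x1 a1 t1 where e1: "(x1,a1)\<in>G" "x = (\<lambda>\<omega>. x1 \<omega> + t1 * y \<omega>)" "a = a1 + t1 * c"
        using h1 G'_def by auto
      obtain x2 a2 t2 where e2: "(x2,a2)\<in>G" "x = (\<lambda>\<omega>. x2 \<omega> + t2 * y \<omega>)" "b = a2 + t2 * c"
        using h2 G'_def by auto
      have pt: "x1 \<omega> + t1 * y \<omega> = x2 \<omega> + t2 * y \<omega>" for \<omega>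
        using e1(2) e2(2) by metis
      show "a = b"
      proof (cases "t1 = t2")
        case True
        then have "x1 = x2" using pt by auto
        then show ?thesis using Gfun e1 e2 True by auto
      next
        case False
        have "((\<lambda>\<omega>. (1/(t2-t1)) * (\<lambda>\<omega>. x1 \<omega> + (\<lambda>\<omega>. (-1) * x2 \<omega>) \<omega>) \<omega>), (1/(t2-t1)) * (a1 + (-1)*a2)) \<in> G"
          by (intro Gsmul Gadd e1(1) e2(1))
        moreover have "(\<lambda>\<omega>. (1/(t2-t1)) * (\<lambda>\<omega>. x1 \<omega> + (\<lambda>\<omega>. (-1) * x2 \<omega>) \<omega>) \<omega>) = y"
        proof
          fix \<omega> show "(1/(t2-t1)) * (\<lambda>\<omega>. x1 \<omega> + (\<lambda>\<omega>. (-1) * x2 \<omega>) \<omega>) \<omega> = y \<omega>"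
            using pt[of \<omega>] False by (simp add: field_simps)
        qed
        ultimately show ?thesis using ny by auto
      qed
    next
      fix x a x' a' assume h1: "(x,a) \<in> G'" and h2: "(x',a') \<in> G'"
      obtain x1 a1 t1 where e1: "(x1,a1)\<in>G" "x = (\<lambda>\<omega>. x1 \<omega> + t1 * y \<omega>)" "a = a1 + t1 * c"
        using h1 G'_def by auto
      obtain x2 a2 t2 where e2: "(x2,a2)\<in>G" "x' = (\<lambda>\<omega>. x2 \<omega> + t2 * y \<omega>)" "a' = a2 + t2 * c"
        using h2 G'_def by auto
      have "((\<lambda>\<omega>. x1 \<omega> + x2 \<omega>), a1 + a2) \<in> G" by (rule Gadd[OF e1(1) e2(1)])
      moreover have "(\<lambda>\<omega>. x \<omega> + x' \<omega>) = (\<lambda>\<omega>. (\<lambda>\<omega>. x1 \<omega> + x2 \<omega>) \<omega> + (t1+t2) * y \<omega>)"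
        using e1 e2 by (simp add: algebra_simps)
      moreover have "a + a' = (a1 + a2) + (t1+t2) * c" using e1 e2 by (simp add: algebra_simps)
      ultimately show "((\<lambda>\<omega>. x \<omega> + x' \<omega>), a + a') \<in> G'" by (rule G'I)
    next
      fix x a s assume h1: "(x,a) \<in> G'"
      obtain x1 a1 t1 where e1: "(x1,a1)\<in>G" "x = (\<lambda>\<omega>. x1 \<omega> + t1 * y \<omega>)" "a = a1 + t1 * c"
        using h1 G'_def by auto
      have "((\<lambda>\<omega>. s * x1 \<omega>), s * a1) \<in> G" by (rule Gsmul[OF e1(1)])
      moreover have "(\<lambda>\<omega>. s * x \<omega>) = (\<lambda>\<omega>. (\<lambda>\<omega>. s * x1 \<omega>) \<omega> + (s*t1) * y \<omega>)"
        using e1 by (simp add: algebra_simps)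
      moreover have "s * a = s * a1 + (s*t1) * c" using e1 by (simp add: algebra_simps)
      ultimately show "((\<lambda>\<omega>. s * x \<omega>), s * a) \<in> G'" by (rule G'I)
    next
      fix x a assume h1: "(x,a) \<in> G'"
      obtain x1 a1 t where e1: "(x1,a1)\<in>G" "x = (\<lambda>\<omega>. x1 \<omega> + t * y \<omega>)" "a = a1 + t * c"
        using h1 G'_def by auto
      have x1V: "x1 \<in> V" using GV e1 by blast
      show "a \<le> q x"
      proof (cases t "0::real" rule: linorder_cases)
        case equal
        then show ?thesis using e1 Gq by simp
      next
        case greater
        have m: "((\<lambda>\<omega>. (1/t) * x1 \<omega>), (1/t) * a1) \<in> G" by (rule Gsmul[OF e1(1)])
        then have "q (\<lambda>\<omega>. (\<lambda>\<omega>. (1/t) * x1 \<omega>) \<omega> + y \<omega>) - (1/t) * a1 \<in> R" by (rule RI) simp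
        then have "c \<le> q (\<lambda>\<omega>. (1/t) * x1 \<omega> + y \<omega>) - (1/t) * a1" using cR by simp
        moreover have "q x = t * q (\<lambda>\<omega>. (1/t) * x1 \<omega> + y \<omega>)"
        proof -
          have "x = (\<lambda>\<omega>. t * (\<lambda>\<omega>. (1/t) * x1 \<omega> + y \<omega>) \<omega>)" using e1 greater by (simp add: fun_eq_iff distrib_left)
          moreover have "(\<lambda>\<omega>. (1/t) * x1 \<omega> + y \<omega>) \<in> V"
            using Vadd[OF Vsmul[OF x1V, of "1/t"] yV] by simp
          ultimately show ?thesis using qsmul[of "\<lambda>\<omega>. (1/t) * x1 \<omega> + y \<omega>" t] greater by simp
        qed
        ultimately have "t * c \<le> q x - a1" using greater
          by (simp add: field_simps mult_left_mono)
        then show ?thesis using e1 by simp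
      next
        case less
        define u where "u = -t"
        have u: "u > 0" using less u_def by simp
        have m: "((\<lambda>\<omega>. (1/u) * x1 \<omega>), (1/u) * a1) \<in> G" by (rule Gsmul[OF e1(1)])
        then have "(1/u) * a1 - q (\<lambda>\<omega>. (\<lambda>\<omega>. (1/u) * x1 \<omega>) \<omega> - y \<omega>) \<in> L" by (rule LI) simp
        then have "(1/u) * a1 - q (\<lambda>\<omega>. (1/u) * x1 \<omega> - y \<omega>) \<le> c" using Lc by simp
        moreover have "q x = u * q (\<lambda>\<omega>. (1/u) * x1 \<omega> - y \<omega>)"
        proof -
          have "x = (\<lambda>\<omega>. u * (\<lambda>\<omega>. (1/u) * x1 \<omega> - y \<omega>) \<omega>)" using e1 u u_def by (simp add: fun_eq_iff right_diff_distrib)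
          moreover have "(\<lambda>\<omega>. (1/u) * x1 \<omega> - y \<omega>) \<in> V"
            using Vsub[OF Vsmul[OF x1V, of "1/u"] yV] by simp
          ultimately show ?thesis using qsmul[of "\<lambda>\<omega>. (1/u) * x1 \<omega> - y \<omega>" u] u by simp
        qed
        ultimately have "a1 - u * c \<le> q x" using u
          by (simp add: field_simps)
        then show ?thesis using e1 u_def by simp
      qed
    qed
    moreover have "G \<subseteq> G'"
    proof
      fix p assume "p \<in> G"
      then obtain x a where "p = (x,a)" "(x,a)\<in>G" by (cases p) auto
      moreover have "x = (\<lambda>\<omega>. x \<omega> + 0 * y \<omega>)" "a = a + 0 * c" by simp_all
      ultimately show "p \<in> G'" using G'I by blast
    qed
    ultimately have "G' = G" using Gmax by blast
    moreover have "(y, c) \<in> G'"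
    proof -
      have "y = (\<lambda>\<omega>. (\<lambda>\<omega>. 0) \<omega> + 1 * y \<omega>)" "c = 0 + 1 * c" by simp_all
      then show ?thesis using G'I[OF G0] by blast
    qed
    ultimately show False using ny by blast
  qed
  define h where "h x = (THE a. (x,a) \<in> G)" for x
  have hG: "(x, h x) \<in> G" if xV: "x \<in> V" for x
  proof -
    obtain a where "(x,a)\<in>G" using dom xV by blast
    moreover then have "h x = a" unfolding h_def using Gfun by blast
    ultimately show ?thesis by simp
  qed
  have hval: "h x = a" if "(x,a)\<in>G" for x a
    using that Gfun hG GV by blast
  show ?thesis
  proof (intro exI conjI ballI allI)
    fix x y assume "x\<in>V" "y\<in>V"
    then show "h (\<lambda>\<omega>. x \<omega> + y \<omega>) = h x + h y" using hval Gadd hG by blast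
  next
    fix x a assume "x\<in>V"
    then show "h (\<lambda>\<omega>. a * x \<omega>) = a * h x" using hval Gsmul hG by blast
  next
    fix x assume "x\<in>V"
    then show "h x \<le> q x" using Gq hG by blast
  qed
qed

lemma Linf_add: "x \<in> Linf M \<Longrightarrow> y \<in> Linf M \<Longrightarrow> (\<lambda>\<omega>. x \<omega> + y \<omega>) \<in> Linf M"
proof -
  assume x: "x \<in> Linf M" and y: "y \<in> Linf M"
  obtain B1 B2 where B1: "AE \<omega> in M. \<bar>x \<omega>\<bar> \<le> B1" and B2: "AE \<omega> in M. \<bar>y \<omega>\<bar> \<le> B2"
    using x y unfolding Linf_def by blast
  have "AE \<omega> in M. \<bar>x \<omega> + y \<omega>\<bar> \<le> B1 + B2"
    using B1 B2 by eventually_elim (auto intro: order.trans[OF abs_triangle_ineq] add_mono)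
  then show ?thesis using x y unfolding Linf_def by auto
qed

lemma Linf_smul: "x \<in> Linf M \<Longrightarrow> (\<lambda>\<omega>. a * x \<omega>) \<in> Linf M"
proof -
  assume x: "x \<in> Linf M"
  obtain B1 where B1: "AE \<omega> in M. \<bar>x \<omega>\<bar> \<le> B1"
    using x unfolding Linf_def by blast
  have "AE \<omega> in M. \<bar>a * x \<omega>\<bar> \<le> \<bar>a\<bar> * B1"
    using B1 by eventually_elim (auto simp: abs_mult intro: mult_left_mono)
  then show ?thesis using x unfolding Linf_def by auto
qed

lemma Linf_const: "(\<lambda>\<omega>. c) \<in> Linf M"
  unfolding Linf_def by auto

lemma linf_bound:
  assumes "prob_space M" "x \<in> Linf M"
  shows "AE \<omega> in M. \<bar>x \<omega>\<bar> \<le> linf_norm M x"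
proof -
  obtain B where xm: "x \<in> borel_measurable M" and B: "AE \<omega> in M. \<bar>x \<omega>\<bar> \<le> B"
    using assms(2) unfolding Linf_def by blast
  define E where "E = esssup M (\<lambda>\<omega>. ereal \<bar>x \<omega>\<bar>)"
  have m: "(\<lambda>\<omega>. ereal \<bar>x \<omega>\<bar>) \<in> borel_measurable M" using xm by measurable
  have AE1: "AE \<omega> in M. ereal \<bar>x \<omega>\<bar> \<le> E" unfolding E_def by (rule esssup_AE)
  have "E \<le> ereal B" unfolding E_def
    by (rule esssup_I[OF m]) (use B in auto)
  moreover have "0 \<le> E"
  proof -
    have "esssup M (\<lambda>\<omega>. ereal 0) \<le> E" unfolding E_def
      by (rule esssup_AE_mono) auto
    moreover have "esssup M (\<lambda>\<omega>. ereal 0) = 0"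
      using esssup_const[of M "ereal 0"] prob_space.emeasure_space_1[OF assms(1)] by simp
    ultimately show ?thesis by simp
  qed
  ultimately have "E = ereal (linf_norm M x)" unfolding linf_norm_def E_def[symmetric]
    by (cases E) auto
  then show ?thesis using AE1 by simp
qed


theorem corollary1:
  fixes M :: "'a measure" and C :: "('a \<Rightarrow> real) set" and f :: "('a \<Rightarrow> real) \<Rightarrow> real"
  assumes "prob_space M"
    and "C \<subseteq> Linf M"
    and "convex_cone_fun C"
    and "\<forall>x\<in>C \<inter> Linf_pos M. AE \<omega> in M. x \<omega> = 0"
    and "f \<in> Linf_dual M"
  shows "(\<Squnion>x\<in>C_one M C. ereal (f x)) < \<infinity> \<longleftrightarrow>
         (\<exists>g\<in>Linf_dual M. dual_ge M g f \<and> g \<in> polar M C)"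
proof -
  have fadd: "\<And>x y. x \<in> Linf M \<Longrightarrow> y \<in> Linf M \<Longrightarrow> f (\<lambda>\<omega>. x \<omega> + y \<omega>) = f x + f y"
   and fsmul: "\<And>x a. x \<in> Linf M \<Longrightarrow> f (\<lambda>\<omega>. a * x \<omega>) = a * f x"
    using assms(5) unfolding Linf_dual_def by blast+
  obtain K where fK: "\<And>x. x \<in> Linf M \<Longrightarrow> \<bar>f x\<bar> \<le> K * linf_norm M x"
    using assms(5) unfolding Linf_dual_def by blast
  have CL: "\<And>x. x \<in> C \<Longrightarrow> x \<in> Linf M" using assms(2) by blast
  have Cadd: "\<And>x y. x \<in> C \<Longrightarrow> y \<in> C \<Longrightarrow> (\<lambda>\<omega>. x \<omega> + y \<omega>) \<in> C"
   and Csmul: "\<And>x a. x \<in> C \<Longrightarrow> 0 \<le> a \<Longrightarrow> (\<lambda>\<omega>. a * x \<omega>) \<in> C"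
   and Cne: "C \<noteq> {}"
    using assms(3) unfolding convex_cone_fun_def by blast+
  have C0: "(\<lambda>\<omega>. 0) \<in> C"
  proof -
    obtain c where "c \<in> C" using Cne by blast
    from Csmul[OF this, of 0] show ?thesis by simp
  qed
  have f0: "f (\<lambda>\<omega>. 0) = 0"
    using fsmul[OF Linf_const[of 0 M], of 0] by simp
  have one: "(\<lambda>\<omega>. 1::real) \<in> Linf M" by (rule Linf_const)
  show ?thesis
  proof
    assume Sfin0: "(\<Squnion>x\<in>C_one M C. ereal (f x)) < \<infinity>"
    define S where "S = (\<Squnion>x\<in>C_one M C. ereal (f x))"
    have Sfin: "S < \<infinity>" using Sfin0 S_def by simp
    have "(\<lambda>\<omega>. 0) \<in> C_one M C" unfolding C_one_def using C0 by auto
    then have "ereal (f (\<lambda>\<omega>. 0)) \<le> S" unfolding S_def by (rule SUP_upper)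
    then have "0 \<le> S" using f0 by (simp add: zero_ereal_def)
    then obtain s where Ss: "S = ereal s" using Sfin by (cases S) auto
    have fs: "f x \<le> s" if "x \<in> C_one M C" for x
    proof -
      have "ereal (f x) \<le> S" unfolding S_def using that by (rule SUP_upper)
      then show ?thesis using Ss by simp
    qed
    have key: "f x \<le> s * t" if x: "x \<in> C" and t: "t > 0" and ae: "AE \<omega> in M. - x \<omega> \<le> t" for x t
    proof -
      have "(\<lambda>\<omega>. (1/t) * x \<omega>) \<in> C" using Csmul[OF x, of "1/t"] t by simp
      moreover have "AE \<omega> in M. max (- ((1/t) * x \<omega>)) 0 \<le> 1"
        using ae by eventually_elim (use t in \<open>auto simp: field_simps\<close>)
      ultimately have "(\<lambda>\<omega>. (1/t) * x \<omega>) \<in> C_one M C" unfolding C_one_def by simp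
      then have "f (\<lambda>\<omega>. (1/t) * x \<omega>) \<le> s" by (rule fs)
      then have "(1/t) * f x \<le> s" using fsmul[OF CL[OF x], of "1/t"] by simp
      then show ?thesis using t by (simp add: field_simps)
    qed
    define Q where "Q y = {s*r - f x | x r. x \<in> C \<and> 0 \<le> r \<and> (AE \<omega> in M. y \<omega> - x \<omega> \<le> r)}" for y
    have QI: "v \<in> Q y" if "x \<in> C" "0 \<le> r" "AE \<omega> in M. y \<omega> - x \<omega> \<le> r" "v = s*r - f x" for x r y v
      unfolding Q_def using that by blast
    define q where "q y = Inf (Q y)" for y
    have Qne: "Q y \<noteq> {}" and Qbdd: "bdd_below (Q y)" if y: "y \<in> Linf M" for y
    proof -
      obtain B where B: "AE \<omega> in M. \<bar>y \<omega>\<bar> \<le> B" using y unfolding Linf_def by blast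
      define B' where "B' = max B 0"
      have B': "AE \<omega> in M. \<bar>y \<omega>\<bar> \<le> B'" using B unfolding B'_def by eventually_elim auto
      have "B' \<ge> 0" unfolding B'_def by simp
      have "s * B' - f (\<lambda>\<omega>. 0) \<in> Q y"
        by (rule QI[OF C0 \<open>B' \<ge> 0\<close>]) (use B' in \<open>auto elim: eventually_mono\<close>)
      then show "Q y \<noteq> {}" by blast
      have "- s * (B' + 1) \<le> v" if v: "v \<in> Q y" for v
      proof -
        obtain x r where xr: "x \<in> C" "0 \<le> r" "AE \<omega> in M. y \<omega> - x \<omega> \<le> r" "v = s*r - f x"
          using v unfolding Q_def by blast
        have "AE \<omega> in M. - x \<omega> \<le> r + B' + 1"
          using xr(3) B' by eventually_elim auto
        then have "f x \<le> s * (r + B' + 1)" using key[OF xr(1)] xr(2) \<open>B' \<ge> 0\<close> by simp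
        then show ?thesis using xr(4) by (simp add: algebra_simps)
      qed
      then show "bdd_below (Q y)" by (rule bdd_belowI)
    qed
    have qle: "q y \<le> v" if "y \<in> Linf M" "v \<in> Q y" for y v
      unfolding q_def using that Qbdd by (simp add: cInf_lower)
    have qge: "w \<le> q y" if "y \<in> Linf M" "\<And>v. v \<in> Q y \<Longrightarrow> w \<le> v" for y w
      unfolding q_def using that Qne by (simp add: cInf_greatest)
    have qadd: "q (\<lambda>\<omega>. y1 \<omega> + y2 \<omega>) \<le> q y1 + q y2" if y1: "y1 \<in> Linf M" and y2: "y2 \<in> Linf M" for y1 y2
    proof -
      have y12: "(\<lambda>\<omega>. y1 \<omega> + y2 \<omega>) \<in> Linf M" using Linf_add[OF y1 y2] .
      have sum: "q (\<lambda>\<omega>. y1 \<omega> + y2 \<omega>) \<le> v1 + v2" if v1: "v1 \<in> Q y1" and v2: "v2 \<in> Q y2" for v1 v2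
      proof -
        obtain x1 r1 where a: "x1 \<in> C" "0 \<le> r1" "AE \<omega> in M. y1 \<omega> - x1 \<omega> \<le> r1" "v1 = s*r1 - f x1"
          using v1 unfolding Q_def by blast
        obtain x2 r2 where b: "x2 \<in> C" "0 \<le> r2" "AE \<omega> in M. y2 \<omega> - x2 \<omega> \<le> r2" "v2 = s*r2 - f x2"
          using v2 unfolding Q_def by blast
        have "v1 + v2 \<in> Q (\<lambda>\<omega>. y1 \<omega> + y2 \<omega>)"
        proof (rule QI[OF Cadd[OF a(1) b(1)]])
          show "0 \<le> r1 + r2" using a b by simp
          show "AE \<omega> in M. y1 \<omega> + y2 \<omega> - (x1 \<omega> + x2 \<omega>) \<le> r1 + r2"
            using a(3) b(3) by eventually_elim auto
          show "v1 + v2 = s * (r1 + r2) - f (\<lambda>\<omega>. x1 \<omega> + x2 \<omega>)"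
            using a b fadd[OF CL[OF a(1)] CL[OF b(1)]] by (simp add: algebra_simps)
        qed
        then show ?thesis using qle[OF y12] by blast
      qed
      have "q (\<lambda>\<omega>. y1 \<omega> + y2 \<omega>) - v2 \<le> q y1" if v2: "v2 \<in> Q y2" for v2
        using qge[OF y1] sum[OF _ v2] by (metis diff_le_eq)
      then have "q (\<lambda>\<omega>. y1 \<omega> + y2 \<omega>) - q y1 \<le> q y2"
        using qge[OF y2] by (metis diff_le_eq add.commute le_diff_eq)
      then show ?thesis by simp
    qed
    have qsm1: "q (\<lambda>\<omega>. a * y \<omega>) \<le> a * q y" if y: "y \<in> Linf M" and a: "a > 0" for y a
    proof -
      have ay: "(\<lambda>\<omega>. a * y \<omega>) \<in> Linf M" using Linf_smul[OF y] .
      have qv: "q (\<lambda>\<omega>. a * y \<omega>) \<le> a * v" if v: "v \<in> Q y" for v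
      proof -
        obtain x r where b: "x \<in> C" "0 \<le> r" "AE \<omega> in M. y \<omega> - x \<omega> \<le> r" "v = s*r - f x"
          using v unfolding Q_def by blast
        have "a * v \<in> Q (\<lambda>\<omega>. a * y \<omega>)"
        proof (rule QI[OF Csmul[OF b(1), of a]])
          show "0 \<le> a" "0 \<le> a * r" using a b by simp_all
          show "AE \<omega> in M. a * y \<omega> - a * x \<omega> \<le> a * r"
            using b(3) by eventually_elim (use a in \<open>auto simp: right_diff_distrib[symmetric]\<close>)
          show "a * v = s * (a * r) - f (\<lambda>\<omega>. a * x \<omega>)"
            using b(4) fsmul[OF CL[OF b(1)], of a] by (simp add: right_diff_distrib)
        qed
        then show ?thesis using qle[OF ay] by blast
      qed
      have "q (\<lambda>\<omega>. a * y \<omega>) / a \<le> v" if vv: "v \<in> Q y" for v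
        using qv[OF vv] a by (simp add: pos_divide_le_eq mult.commute)
      then have "q (\<lambda>\<omega>. a * y \<omega>) / a \<le> q y" using qge[OF y] by blast
      then show ?thesis using a by (simp add: pos_divide_le_eq mult.commute)
    qed
    have qsmul: "q (\<lambda>\<omega>. a * y \<omega>) = a * q y" if y: "y \<in> Linf M" and a: "a > 0" for y a
    proof -
      have "q y = q (\<lambda>\<omega>. (1/a) * (\<lambda>\<omega>. a * y \<omega>) \<omega>)" using a by simp
      also have "\<dots> \<le> (1/a) * q (\<lambda>\<omega>. a * y \<omega>)"
        by (rule qsm1) (use Linf_smul[OF y] a in auto)
      finally have "a * q y \<le> q (\<lambda>\<omega>. a * y \<omega>)" using a by (simp add: field_simps)
      then show ?thesis using qsm1[OF y a] by simp
    qed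
    obtain h where hadd: "\<And>x y. x\<in>Linf M \<Longrightarrow> y\<in>Linf M \<Longrightarrow> h (\<lambda>\<omega>. x \<omega> + y \<omega>) = h x + h y"
      and hsmul: "\<And>x a. x\<in>Linf M \<Longrightarrow> h (\<lambda>\<omega>. a * x \<omega>) = a * h x"
      and hq: "\<And>x. x\<in>Linf M \<Longrightarrow> h x \<le> q x"
      using hahn_banach_fun[of "Linf M" q, OF Linf_const Linf_add Linf_smul qadd qsmul] by blast
    have hC: "h x \<le> - f x" if x: "x \<in> C" for x
    proof -
      have "s * 0 - f x \<in> Q x" by (rule QI[OF x, of 0]) auto
      then show ?thesis using hq[OF CL[OF x]] qle[OF CL[OF x]] by fastforce
    qed
    have hpos: "0 \<le> h z" if z: "z \<in> Linf_pos M" for z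
    proof -
      have zL: "z \<in> Linf M" and zp: "AE \<omega> in M. 0 \<le> z \<omega>" using z unfolding Linf_pos_def by auto
      have mz: "(\<lambda>\<omega>. (-1) * z \<omega>) \<in> Linf M" by (rule Linf_smul[OF zL])
      have "s * 0 - f (\<lambda>\<omega>. 0) \<in> Q (\<lambda>\<omega>. (-1) * z \<omega>)"
        by (rule QI[OF C0, of 0]) (use zp in \<open>auto elim: eventually_mono\<close>)
      then have "h (\<lambda>\<omega>. (-1) * z \<omega>) \<le> 0" using hq[OF mz] qle[OF mz] f0 by fastforce
      then show ?thesis using hsmul[OF zL, of "-1"] by simp
    qed
    define g where "g x = f x + h x" for x
    have hbd: "\<bar>h x\<bar> \<le> h (\<lambda>\<omega>. 1) * linf_norm M x" if x: "x \<in> Linf M" for x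
    proof -
      define n where "n = linf_norm M x"
      have ae: "AE \<omega> in M. \<bar>x \<omega>\<bar> \<le> n" unfolding n_def by (rule linf_bound[OF assms(1) x])
      have c: "(\<lambda>\<omega>. n * 1) \<in> Linf M" by (rule Linf_const)
      have mx: "(\<lambda>\<omega>. (-1) * x \<omega>) \<in> Linf M" by (rule Linf_smul[OF x])
      have "(\<lambda>\<omega>. (\<lambda>\<omega>. n * 1) \<omega> + (\<lambda>\<omega>. (-1) * x \<omega>) \<omega>) \<in> Linf_pos M"
        unfolding Linf_pos_def using Linf_add[OF c mx] ae by (auto elim: eventually_mono)
      then have "0 \<le> h (\<lambda>\<omega>. n * 1) + h (\<lambda>\<omega>. (-1) * x \<omega>)" using hpos hadd[OF c mx] by metis
      then have 1: "h x \<le> n * h (\<lambda>\<omega>. 1)" using hsmul[OF one, of n] hsmul[OF x, of "-1"] by simp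
      have "(\<lambda>\<omega>. (\<lambda>\<omega>. n * 1) \<omega> + x \<omega>) \<in> Linf_pos M"
        unfolding Linf_pos_def using Linf_add[OF c x] ae by (auto elim: eventually_mono)
      then have "0 \<le> h (\<lambda>\<omega>. n * 1) + h x" using hpos hadd[OF c x] by metis
      then have 2: "- h x \<le> n * h (\<lambda>\<omega>. 1)" using hsmul[OF one, of n] by simp
      show ?thesis using 1 2 unfolding n_def by (simp add: abs_le_iff mult.commute)
    qed
    have gD: "g \<in> Linf_dual M"
      unfolding Linf_dual_def
    proof (intro CollectI conjI ballI allI)
      fix x y assume "x \<in> Linf M" "y \<in> Linf M"
      then show "g (\<lambda>\<omega>. x \<omega> + y \<omega>) = g x + g y" unfolding g_def using fadd hadd by simp
    next
      fix x a assume "x \<in> Linf M"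
      then show "g (\<lambda>\<omega>. a * x \<omega>) = a * g x" unfolding g_def using fsmul hsmul by (simp add: algebra_simps)
    next
      show "\<exists>K. \<forall>x\<in>Linf M. \<bar>g x\<bar> \<le> K * linf_norm M x"
      proof (intro exI ballI)
        fix x assume x: "x \<in> Linf M"
        have "\<bar>g x\<bar> \<le> \<bar>f x\<bar> + \<bar>h x\<bar>" unfolding g_def by (rule abs_triangle_ineq)
        also have "\<dots> \<le> K * linf_norm M x + h (\<lambda>\<omega>. 1) * linf_norm M x"
          using fK[OF x] hbd[OF x] by simp
        finally show "\<bar>g x\<bar> \<le> (K + h (\<lambda>\<omega>. 1)) * linf_norm M x" by (simp add: algebra_simps)
      qed
    qed
    have "dual_ge M g f" unfolding dual_ge_def g_def using hpos by simp
    moreover have "g \<in> polar M C"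
    proof -
      have "\<forall>x\<in>C. g x \<le> 0" using hC by (fastforce simp: g_def)
      then show ?thesis unfolding polar_def using gD by blast
    qed
    ultimately show "\<exists>g\<in>Linf_dual M. dual_ge M g f \<and> g \<in> polar M C" using gD by blast
  next
    assume "\<exists>g\<in>Linf_dual M. dual_ge M g f \<and> g \<in> polar M C"
    then obtain g where gD: "g \<in> Linf_dual M" and ge: "dual_ge M g f" and gp: "g \<in> polar M C" by blast
    have gadd: "\<And>x y. x \<in> Linf M \<Longrightarrow> y \<in> Linf M \<Longrightarrow> g (\<lambda>\<omega>. x \<omega> + y \<omega>) = g x + g y"
      using gD unfolding Linf_dual_def by blast
    have bd: "f x \<le> g (\<lambda>\<omega>. 1) - f (\<lambda>\<omega>. 1)" if x: "x \<in> C_one M C" for x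
    proof -
      have xC: "x \<in> C" and ae: "AE \<omega> in M. max (- x \<omega>) 0 \<le> 1" using x unfolding C_one_def by auto
      have xL: "x \<in> Linf M" using CL[OF xC] .
      have "(\<lambda>\<omega>. 1 + x \<omega>) \<in> Linf_pos M"
        unfolding Linf_pos_def using Linf_add[OF one xL] ae by (auto elim: eventually_mono)
      then have "0 \<le> g (\<lambda>\<omega>. 1 + x \<omega>) - f (\<lambda>\<omega>. 1 + x \<omega>)" using ge unfolding dual_ge_def by blast
      moreover have "g (\<lambda>\<omega>. 1 + x \<omega>) = g (\<lambda>\<omega>. 1) + g x" using gadd[OF one xL] by simp
      moreover have "f (\<lambda>\<omega>. 1 + x \<omega>) = f (\<lambda>\<omega>. 1) + f x" using fadd[OF one xL] by simp
      moreover have "g x \<le> 0" using gp xC unfolding polar_def by blast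
      ultimately show ?thesis by simp
    qed
    have "(\<Squnion>x\<in>C_one M C. ereal (f x)) \<le> ereal (g (\<lambda>\<omega>. 1) - f (\<lambda>\<omega>. 1))"
      by (rule SUP_least) (use bd in simp)
    then show "(\<Squnion>x\<in>C_one M C. ereal (f x)) < \<infinity>"
      using order.strict_trans1 by fastforce
  qed
qed

end
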